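(* Let $A$ be an ideal of $D$ such that $A=(I_1I_2\cdots I_m)^{\ast}$ for some finitely many $\ast$-homog ideals $I_1,\dots,I_m$. Then $A=(J_1J_2\cdots J_r)^\ast$ for some $\ast$-homog ideals $J_1,\dots,J_r$ that are mutually $\ast$-comaximal, and this expression is unique up to order: if also $A=(K_1\cdots K_s)^\ast$ with $K_1,\dots,K_s$ mutually $\ast$-comaximal $\ast$-homog ideals, then $r=s$ and after reordering $J_i=K_i$ for all $i$.
   Context: $D$ is an integral domain and $\ast$ is a star operation on $D$ of finite character. A $\ast$-ideal is a nonzero fractional ideal $I$ with $I^\ast=I$; it is of finite type if $I=J^\ast$ for some nonzero finitely generated $J$. A maximal $\ast$-ideal is an integral $\ast$-ideal maximal among proper integral $\ast$-ideals. Ideals $A,B$ are $\ast$-comaximal if $(A+B)^\ast=D$. A $\ast$-homog ideal of $D$ is an integral $\ast$-ideal $I$ of finite type with $I\subsetneq D$ such that $(J+L)^{\ast}\neq D$ for every pair $J,L$ of proper integral $\ast$-ideals of finite type containing $I$. *)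

theory Defs
  imports Main "HOL-Library.Multiset"
begin

text \<open>The integral domain D is modelled as a subring of a field 'k which is its
quotient field; fractional ideals are subsets of 'k.\<close>

definition quotient_domain :: "'k::field set \<Rightarrow> bool" where
  "quotient_domain D \<longleftrightarrow> 0 \<in> D \<and> 1 \<in> D \<and>
     (\<forall>x\<in>D. \<forall>y\<in>D. x + y \<in> D \<and> x - y \<in> D \<and> x * y \<in> D) \<and>
     (\<forall>x. \<exists>a\<in>D. \<exists>b\<in>D. b \<noteq> 0 \<and> x = a / b)"

definition dmodule :: "'k::field set \<Rightarrow> 'k set \<Rightarrow> bool" where
  "dmodule D I \<longleftrightarrow> 0 \<in> I \<and> (\<forall>x\<in>I. \<forall>y\<in>I. x + y \<in> I) \<and> (\<forall>d\<in>D. \<forall>x\<in>I. d * x \<in> I)"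

definition frac_ideal :: "'k::field set \<Rightarrow> 'k set \<Rightarrow> bool" where
  "frac_ideal D I \<longleftrightarrow> dmodule D I \<and> I \<noteq> {0} \<and> (\<exists>d\<in>D. d \<noteq> 0 \<and> (\<lambda>x. d * x) ` I \<subseteq> D)"

definition principal :: "'k::field set \<Rightarrow> 'k \<Rightarrow> 'k set" where
  "principal D x = {d * x | d. d \<in> D}"

definition scale :: "'k::field \<Rightarrow> 'k set \<Rightarrow> 'k set" where
  "scale x I = (\<lambda>y. x * y) ` I"

definition gen :: "'k::field set \<Rightarrow> 'k set \<Rightarrow> 'k set" where
  "gen D F = {(\<Sum>x\<in>F. c x * x) | c. \<forall>x\<in>F. c x \<in> D}"

definition fin_gen :: "'k::field set \<Rightarrow> 'k set \<Rightarrow> bool" where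
  "fin_gen D J \<longleftrightarrow> (\<exists>F. finite F \<and> J = gen D F)"

definition star_operation :: "'k::field set \<Rightarrow> ('k set \<Rightarrow> 'k set) \<Rightarrow> bool" where
  "star_operation D st \<longleftrightarrow>
     (\<forall>I. frac_ideal D I \<longrightarrow> frac_ideal D (st I)) \<and>
     (\<forall>x. x \<noteq> 0 \<longrightarrow> st (principal D x) = principal D x) \<and>
     (\<forall>x I. x \<noteq> 0 \<and> frac_ideal D I \<longrightarrow> st (scale x I) = scale x (st I)) \<and>
     (\<forall>I. frac_ideal D I \<longrightarrow> I \<subseteq> st I) \<and>
     (\<forall>I J. frac_ideal D I \<and> frac_ideal D J \<and> I \<subseteq> J \<longrightarrow> st I \<subseteq> st J) \<and>
     (\<forall>I. frac_ideal D I \<longrightarrow> st (st I) = st I)"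

definition finite_character :: "'k::field set \<Rightarrow> ('k set \<Rightarrow> 'k set) \<Rightarrow> bool" where
  "finite_character D st \<longleftrightarrow>
     (\<forall>I. frac_ideal D I \<longrightarrow>
        st I = \<Union>{st J | J. J \<subseteq> I \<and> fin_gen D J \<and> J \<noteq> {0}})"

definition ideal_sum :: "'k::{plus} set \<Rightarrow> 'k set \<Rightarrow> 'k set" where
  "ideal_sum I J = {a + b | a b. a \<in> I \<and> b \<in> J}"

definition ideal_prod :: "'k::comm_ring_1 set \<Rightarrow> 'k set \<Rightarrow> 'k set" where
  "ideal_prod I J = {(\<Sum>i<n. a i * b i) | (n::nat) a b. \<forall>i<n. a i \<in> I \<and> b i \<in> J}"

definition ideal_prod_list :: "'k::field set \<Rightarrow> 'k set list \<Rightarrow> 'k set" where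
  "ideal_prod_list D Is = foldr ideal_prod Is D"

definition star_ideal :: "'k::field set \<Rightarrow> ('k set \<Rightarrow> 'k set) \<Rightarrow> 'k set \<Rightarrow> bool" where
  "star_ideal D st I \<longleftrightarrow> frac_ideal D I \<and> st I = I"

definition integral_star_ideal :: "'k::field set \<Rightarrow> ('k set \<Rightarrow> 'k set) \<Rightarrow> 'k set \<Rightarrow> bool" where
  "integral_star_ideal D st I \<longleftrightarrow> star_ideal D st I \<and> I \<subseteq> D"

definition finite_type :: "'k::field set \<Rightarrow> ('k set \<Rightarrow> 'k set) \<Rightarrow> 'k set \<Rightarrow> bool" where
  "finite_type D st I \<longleftrightarrow> (\<exists>J. fin_gen D J \<and> J \<noteq> {0} \<and> I = st J)"

definition star_comaximal :: "'k::field set \<Rightarrow> ('k set \<Rightarrow> 'k set) \<Rightarrow> 'k set \<Rightarrow> 'k set \<Rightarrow> bool" where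
  "star_comaximal D st A B \<longleftrightarrow> st (ideal_sum A B) = D"

definition star_homog :: "'k::field set \<Rightarrow> ('k set \<Rightarrow> 'k set) \<Rightarrow> 'k set \<Rightarrow> bool" where
  "star_homog D st I \<longleftrightarrow> integral_star_ideal D st I \<and> finite_type D st I \<and> I \<noteq> D \<and>
     (\<forall>J L. integral_star_ideal D st J \<and> finite_type D st J \<and> J \<noteq> D \<and> I \<subseteq> J \<and>
            integral_star_ideal D st L \<and> finite_type D st L \<and> L \<noteq> D \<and> I \<subseteq> L
        \<longrightarrow> st (ideal_sum J L) \<noteq> D)"

definition mutually_star_comaximal :: "'k::field set \<Rightarrow> ('k set \<Rightarrow> 'k set) \<Rightarrow> 'k set list \<Rightarrow> bool" where
  "mutually_star_comaximal D st Js \<longleftrightarrow>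
     (\<forall>i<length Js. \<forall>j<length Js. i \<noteq> j \<longrightarrow> star_comaximal D st (Js ! i) (Js ! j))"

end

theory Submission
  imports Defs
begin


lemma ip_mem: "x \<in> ideal_prod I J \<longleftrightarrow> (\<exists>(n::nat) a b. x = (\<Sum>i<n. a i * b i) \<and> (\<forall>i<n. a i \<in> I \<and> b i \<in> J))"
  unfolding ideal_prod_def by blast

lemma ip_0: "0 \<in> ideal_prod I J"
  unfolding ideal_prod_def by (rule CollectI, rule exI[of _ "0::nat"]) auto

lemma ip_mult: "a \<in> I \<Longrightarrow> b \<in> J \<Longrightarrow> a * b \<in> ideal_prod I J"
  unfolding ideal_prod_def
  by (rule CollectI, rule exI[of _ "1::nat"], rule exI[of _ "\<lambda>_. a"], rule exI[of _ "\<lambda>_. b"]) auto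

lemma sum_concat_lt: "(\<Sum>i<n+m. f i) = (\<Sum>i<n. f i) + (\<Sum>i<m. f (n+i))"
  for f :: "nat \<Rightarrow> 'a::comm_monoid_add"
  by (induction m) (auto simp: add.assoc)

lemma ip_add: "x \<in> ideal_prod I J \<Longrightarrow> y \<in> ideal_prod I J \<Longrightarrow> x + y \<in> ideal_prod I J"
proof -
  assume "x \<in> ideal_prod I J" "y \<in> ideal_prod I J"
  then obtain n a b m c d where x: "x = (\<Sum>i<(n::nat). a i * b i)" "\<forall>i<n. a i \<in> I \<and> b i \<in> J"
    and y: "y = (\<Sum>i<(m::nat). c i * d i)" "\<forall>i<m. c i \<in> I \<and> d i \<in> J"
    unfolding ip_mem by blast
  define A where "A i = (if i < n then a i else c (i - n))" for i
  define B where "B i = (if i < n then b i else d (i - n))" for i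
  have "(\<Sum>i<n+m. A i * B i) = (\<Sum>i<n. A i * B i) + (\<Sum>i<m. A (n+i) * B (n+i))"
    by (rule sum_concat_lt)
  also have "(\<Sum>i<n. A i * B i) = x" unfolding x A_def B_def by (rule sum.cong) auto
  also have "(\<Sum>i<m. A (n+i) * B (n+i)) = y" unfolding y A_def B_def by (rule sum.cong) auto
  finally have "x + y = (\<Sum>i<n+m. A i * B i)" by simp
  moreover have "\<forall>i<n+m. A i \<in> I \<and> B i \<in> J" using x y by (auto simp: A_def B_def)
  ultimately show ?thesis unfolding ideal_prod_def by blast
qed

lemma ip_induct:
  assumes "x \<in> ideal_prod I J" "0 \<in> S" "\<And>a b. a \<in> I \<Longrightarrow> b \<in> J \<Longrightarrow> a * b \<in> S"
    "\<And>u v. u \<in> S \<Longrightarrow> v \<in> S \<Longrightarrow> u + v \<in> S"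
  shows "x \<in> S"
proof -
  obtain n a b where x: "x = (\<Sum>i<(n::nat). a i * b i)" "\<forall>i<n. a i \<in> I \<and> b i \<in> J"
    using assms(1) unfolding ip_mem by blast
  have "\<forall>k\<le>n. (\<Sum>i<k. a i * b i) \<in> S"
  proof (intro allI impI)
    fix k assume "k \<le> n" then show "(\<Sum>i<k. a i * b i) \<in> S"
      by (induction k) (auto simp: assms x)
  qed
  then show ?thesis using x by auto
qed

lemma ip_subsetI:
  assumes "0 \<in> S" "\<And>a b. a \<in> I \<Longrightarrow> b \<in> J \<Longrightarrow> a * b \<in> S"
    "\<And>u v. u \<in> S \<Longrightarrow> v \<in> S \<Longrightarrow> u + v \<in> S"
  shows "ideal_prod I J \<subseteq> S"
  using ip_induct[OF _ assms] by blast

lemma ip_comm1: "ideal_prod I J \<subseteq> ideal_prod J I"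
proof (rule ip_subsetI[OF ip_0 _ ip_add])
  fix a b assume "a \<in> I" "b \<in> J"
  then have "b * a \<in> ideal_prod J I" by (rule ip_mult[rotated])
  then show "a * b \<in> ideal_prod J I" by (simp add: mult.commute)
qed

lemma ip_comm: "ideal_prod I J = ideal_prod J I"
  using ip_comm1 by blast

lemma ip_mono: "I \<subseteq> I' \<Longrightarrow> J \<subseteq> J' \<Longrightarrow> ideal_prod I J \<subseteq> ideal_prod I' J'"
  by (rule ip_subsetI[OF ip_0 _ ip_add]) (auto intro: ip_mult)

lemma ip_assoc1: "ideal_prod (ideal_prod I J) K \<subseteq> ideal_prod I (ideal_prod J K)"
proof (rule ip_subsetI[OF ip_0 _ ip_add])
  fix x c assume x: "x \<in> ideal_prod I J" and c: "c \<in> K"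
  have "x \<in> {x. x * c \<in> ideal_prod I (ideal_prod J K)}"
  proof (rule ip_induct[OF x])
    show "0 \<in> {x. x * c \<in> ideal_prod I (ideal_prod J K)}" by (simp add: ip_0)
  next
    fix a b assume "a \<in> I" "b \<in> J"
    then show "a * b \<in> {x. x * c \<in> ideal_prod I (ideal_prod J K)}"
      using c by (simp add: ip_mult mult.assoc)
  next
    fix u v assume "u \<in> {x. x * c \<in> ideal_prod I (ideal_prod J K)}"
      "v \<in> {x. x * c \<in> ideal_prod I (ideal_prod J K)}"
    then show "u + v \<in> {x. x * c \<in> ideal_prod I (ideal_prod J K)}"
      by (simp add: distrib_right ip_add)
  qed
  then show "x * c \<in> ideal_prod I (ideal_prod J K)" by simp
qed

lemma ip_assoc: "ideal_prod (ideal_prod I J) K = ideal_prod I (ideal_prod J K)"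
proof
  show "ideal_prod (ideal_prod I J) K \<subseteq> ideal_prod I (ideal_prod J K)" by (rule ip_assoc1)
  have "ideal_prod I (ideal_prod J K) = ideal_prod (ideal_prod K J) I"
    by (simp add: ip_comm)
  also have "\<dots> \<subseteq> ideal_prod K (ideal_prod J I)" by (rule ip_assoc1)
  also have "\<dots> = ideal_prod (ideal_prod I J) K" by (simp add: ip_comm)
  finally show "ideal_prod I (ideal_prod J K) \<subseteq> ideal_prod (ideal_prod I J) K" .
qed

lemma ip_lcomm: "ideal_prod I (ideal_prod J K) = ideal_prod J (ideal_prod I K)"
proof -
  have "ideal_prod I (ideal_prod J K) = ideal_prod (ideal_prod I J) K" by (simp only: ip_assoc)
  also have "\<dots> = ideal_prod (ideal_prod J I) K" by (simp only: ip_comm[of I J])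
  also have "\<dots> = ideal_prod J (ideal_prod I K)" by (simp only: ip_assoc)
  finally show ?thesis .
qed

lemma prod_list_mset:
  assumes "mset xs = mset ys" shows "ideal_prod_list D xs = ideal_prod_list D ys"
proof -
  have "foldr ideal_prod xs D = List.fold ideal_prod (rev xs) D" by (simp add: foldr_conv_fold)
  also have "List.fold ideal_prod (rev xs) = List.fold ideal_prod (rev ys)"
    by (rule fold_multiset_equiv) (auto simp: fun_eq_iff ip_lcomm assms)
  also have "List.fold ideal_prod (rev ys) D = foldr ideal_prod ys D" by (simp add: foldr_conv_fold)
  finally show ?thesis by (simp add: ideal_prod_list_def)
qed



lemma sum_closed:
  assumes "0 \<in> S" "\<And>u v. u \<in> S \<Longrightarrow> v \<in> S \<Longrightarrow> u + v \<in> S" "\<And>x. x \<in> A \<Longrightarrow> f x \<in> S"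
  shows "sum f A \<in> S"
proof (cases "finite A")
  case True
  then show ?thesis using assms(3) by (induction A rule: finite_induct) (auto intro: assms)
qed (simp add: assms)

locale sd =
  fixes D :: "'k::field set" and st :: "'k set \<Rightarrow> 'k set"
  assumes qd: "quotient_domain D" and so: "star_operation D st" and fc: "finite_character D st"
begin

lemma D0: "0 \<in> D" and D1: "1 \<in> D"
  and Dadd: "x \<in> D \<Longrightarrow> y \<in> D \<Longrightarrow> x + y \<in> D"
  and Dmul: "x \<in> D \<Longrightarrow> y \<in> D \<Longrightarrow> x * y \<in> D"
  and Ddiff: "x \<in> D \<Longrightarrow> y \<in> D \<Longrightarrow> x - y \<in> D"
  and Dquot: "\<exists>a\<in>D. \<exists>b\<in>D. b \<noteq> 0 \<and> z = a / b"
proof -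
  have H: "0 \<in> D \<and> 1 \<in> D \<and>
     (\<forall>x\<in>D. \<forall>y\<in>D. x + y \<in> D \<and> x - y \<in> D \<and> x * y \<in> D) \<and>
     (\<forall>x. \<exists>a\<in>D. \<exists>b\<in>D. b \<noteq> 0 \<and> x = a / b)" by (rule qd[unfolded quotient_domain_def])
  have H3: "\<forall>x\<in>D. \<forall>y\<in>D. x + y \<in> D \<and> x - y \<in> D \<and> x * y \<in> D"
    using H by (rule conjunct1[OF conjunct2[OF conjunct2]])
  have H4: "\<forall>x. \<exists>a\<in>D. \<exists>b\<in>D. b \<noteq> 0 \<and> x = a / b"
    using H by (rule conjunct2[OF conjunct2[OF conjunct2]])
  show "0 \<in> D" using H by (rule conjunct1)
  show "1 \<in> D" using H by (rule conjunct1[OF conjunct2])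
  show "x \<in> D \<Longrightarrow> y \<in> D \<Longrightarrow> x + y \<in> D" using H3 by blast
  show "x \<in> D \<Longrightarrow> y \<in> D \<Longrightarrow> x * y \<in> D" using H3 by blast
  show "x \<in> D \<Longrightarrow> y \<in> D \<Longrightarrow> x - y \<in> D" using H3 by blast
  show "\<exists>a\<in>D. \<exists>b\<in>D. b \<noteq> 0 \<and> z = a / b" using H4 by (rule spec)
qed

lemma st_frac: "frac_ideal D I \<Longrightarrow> frac_ideal D (st I)"
  and st_principal: "x \<noteq> 0 \<Longrightarrow> st (principal D x) = principal D x"
  and st_scale: "x \<noteq> 0 \<Longrightarrow> frac_ideal D I \<Longrightarrow> st (scale x I) = scale x (st I)"
  and st_ext: "frac_ideal D I \<Longrightarrow> I \<subseteq> st I"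
  and st_mono: "frac_ideal D I \<Longrightarrow> frac_ideal D J \<Longrightarrow> I \<subseteq> J \<Longrightarrow> st I \<subseteq> st J"
  and st_idem: "frac_ideal D I \<Longrightarrow> st (st I) = st I"
proof -
  note h = so[unfolded star_operation_def]
  note h1 = h[THEN conjunct1] and h2 = h[THEN conjunct2, THEN conjunct1]
    and h3 = h[THEN conjunct2, THEN conjunct2, THEN conjunct1]
    and h4 = h[THEN conjunct2, THEN conjunct2, THEN conjunct2, THEN conjunct1]
    and h5 = h[THEN conjunct2, THEN conjunct2, THEN conjunct2, THEN conjunct2, THEN conjunct1]
    and h6 = h[THEN conjunct2, THEN conjunct2, THEN conjunct2, THEN conjunct2, THEN conjunct2]
  show "frac_ideal D I \<Longrightarrow> frac_ideal D (st I)" using h1 by blast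
  show "x \<noteq> 0 \<Longrightarrow> st (principal D x) = principal D x" using h2 by blast
  show "x \<noteq> 0 \<Longrightarrow> frac_ideal D I \<Longrightarrow> st (scale x I) = scale x (st I)" using h3 by blast
  show "frac_ideal D I \<Longrightarrow> I \<subseteq> st I" using h4 by blast
  show "frac_ideal D I \<Longrightarrow> frac_ideal D J \<Longrightarrow> I \<subseteq> J \<Longrightarrow> st I \<subseteq> st J" using h5 by blast
  show "frac_ideal D I \<Longrightarrow> st (st I) = st I" using h6 by blast
qed

lemma fc': "frac_ideal D I \<Longrightarrow> st I = \<Union>{st J | J. J \<subseteq> I \<and> fin_gen D J \<and> J \<noteq> {0}}"
  using fc unfolding finite_character_def by (rule allE) (erule mp)

lemma principal_1: "principal D 1 = D"
  unfolding principal_def by auto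

lemma st_D: "st D = D"
proof -
  have "st (principal D 1) = principal D 1" by (rule st_principal) simp
  then show ?thesis by (simp only: principal_1)
qed

lemma dmodule_D: "dmodule D D"
  unfolding dmodule_def using D0 Dadd Dmul by auto

lemma int_frac: "dmodule D I \<Longrightarrow> I \<subseteq> D \<Longrightarrow> I \<noteq> {0} \<Longrightarrow> frac_ideal D I"
  unfolding frac_ideal_def using D1 by (intro conjI bexI[of _ 1]) auto

lemma frac_D: "frac_ideal D D"
proof -
  have "D \<noteq> {0}" using D1 by (metis singletonD zero_neq_one)
  then show ?thesis using int_frac[OF dmodule_D] by blast
qed

lemma frac_dmod: "frac_ideal D I \<Longrightarrow> dmodule D I"
  and frac_nz: "frac_ideal D I \<Longrightarrow> I \<noteq> {0}"
  unfolding frac_ideal_def by auto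

lemma dm0: "dmodule D I \<Longrightarrow> 0 \<in> I"
  and dmadd: "dmodule D I \<Longrightarrow> x \<in> I \<Longrightarrow> y \<in> I \<Longrightarrow> x + y \<in> I"
  and dmmul: "dmodule D I \<Longrightarrow> d \<in> D \<Longrightarrow> x \<in> I \<Longrightarrow> d * x \<in> I"
  unfolding dmodule_def by auto

lemma frac_den: "frac_ideal D I \<Longrightarrow> \<exists>d\<in>D. d \<noteq> 0 \<and> (\<forall>x\<in>I. d * x \<in> D)"
  unfolding frac_ideal_def image_subset_iff by (elim conjE) assumption

lemma frac_ex_nz: "frac_ideal D I \<Longrightarrow> \<exists>x\<in>I. x \<noteq> 0"
  using frac_nz frac_dmod dm0 by blast

lemma one_in_eq: "dmodule D I \<Longrightarrow> I \<subseteq> D \<Longrightarrow> 1 \<in> I \<Longrightarrow> I = D"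
  using dmmul[of I _ 1] by auto

lemma ip_dmodule: "dmodule D I \<Longrightarrow> dmodule D (ideal_prod I J)"
proof -
  assume I: "dmodule D I"
  have "d * x \<in> ideal_prod I J" if "d \<in> D" "x \<in> ideal_prod I J" for d x
  proof -
    have "x \<in> {x. d * x \<in> ideal_prod I J}"
    proof (rule ip_induct[OF that(2)])
      fix a b assume "a \<in> I" "b \<in> J"
      then have "(d * a) * b \<in> ideal_prod I J" using dmmul[OF I that(1)] ip_mult by blast
      then show "a * b \<in> {x. d * x \<in> ideal_prod I J}" by (simp add: mult.assoc)
    qed (auto simp: ip_0 distrib_left intro: ip_add)
    then show ?thesis by simp
  qed
  then show ?thesis unfolding dmodule_def using ip_0 ip_add by blast
qed

lemma ip_frac:
  assumes "frac_ideal D I" "frac_ideal D J" shows "frac_ideal D (ideal_prod I J)"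
proof -
  obtain a where a: "a \<in> I" "a \<noteq> 0" using frac_ex_nz[OF assms(1)] by blast
  obtain b where b: "b \<in> J" "b \<noteq> 0" using frac_ex_nz[OF assms(2)] by blast
  obtain d where d: "d \<in> D" "d \<noteq> 0" "\<forall>x\<in>I. d * x \<in> D" using frac_den[OF assms(1)] by blast
  obtain e where e: "e \<in> D" "e \<noteq> 0" "\<forall>x\<in>J. e * x \<in> D" using frac_den[OF assms(2)] by blast
  have "x \<in> {x. d * e * x \<in> D}" if "x \<in> ideal_prod I J" for x
  proof (rule ip_induct[OF that])
    show "0 \<in> {x. d * e * x \<in> D}" using D0 by simp
  next
    fix u v assume "u \<in> I" "v \<in> J"
    then have "d * u \<in> D" "e * v \<in> D" using d(3) e(3) by blast+
    then have "(d * u) * (e * v) \<in> D" by (rule Dmul)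
    moreover have "d * e * (u * v) = (d * u) * (e * v)" by algebra
    ultimately have "d * e * (u * v) \<in> D" by (simp only:)
    then show "u * v \<in> {x. d * e * x \<in> D}" by simp
  next
    fix u v assume "u \<in> {x. d * e * x \<in> D}" "v \<in> {x. d * e * x \<in> D}"
    then have "d * e * u + d * e * v \<in> D" by (simp add: Dadd)
    then show "u + v \<in> {x. d * e * x \<in> D}" by (simp add: distrib_left)
  qed
  moreover have "a * b \<in> ideal_prod I J" "a * b \<noteq> 0" using a b ip_mult by auto
  ultimately have 1: "ideal_prod I J \<noteq> {0}" "\<forall>x\<in>ideal_prod I J. d * e * x \<in> D"
    by (metis singletonD, blast)
  have 2: "dmodule D (ideal_prod I J)" using ip_dmodule[OF frac_dmod[OF assms(1)]] .
  have 3: "d * e \<in> D" "d * e \<noteq> 0" using Dmul[OF d(1) e(1)] d(2) e(2) by auto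
  have 4: "(\<lambda>x. d * e * x) ` ideal_prod I J \<subseteq> D" using 1(2) by (simp add: image_subset_iff)
  show ?thesis unfolding frac_ideal_def
  proof (intro conjI bexI[of _ "d * e"])
  qed (fact 1 2 3 4)+
qed

lemma ip_sub_left: "dmodule D I \<Longrightarrow> J \<subseteq> D \<Longrightarrow> ideal_prod I J \<subseteq> I"
proof (rule ip_subsetI)
  fix a b assume "dmodule D I" "J \<subseteq> D" "a \<in> I" "b \<in> J"
  then have "b * a \<in> I" using dmmul by blast
  then show "a * b \<in> I" by (simp add: mult.commute)
qed (auto intro: dm0 dmadd)

lemma ip_D_right: "dmodule D I \<Longrightarrow> ideal_prod I D = I"
  using ip_sub_left[of I D] ip_mult[of _ I 1 D] D1 by auto

lemma scale_frac:
  assumes "frac_ideal D I" "x \<noteq> 0" shows "frac_ideal D (scale x I)"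
proof -
  obtain p q where pq: "p \<in> D" "q \<in> D" "q \<noteq> 0" "x = p / q" using Dquot by blast
  obtain d where d: "d \<in> D" "d \<noteq> 0" "\<forall>y\<in>I. d * y \<in> D" using frac_den[OF assms(1)] by blast
  have I: "dmodule D I" "I \<noteq> {0}" using assms frac_dmod frac_nz by auto
  have "dmodule D (scale x I)" unfolding dmodule_def
  proof (intro conjI ballI)
    show "0 \<in> scale x I" unfolding scale_def using dm0[OF I(1)] by force
  next
    fix u v assume "u \<in> scale x I" "v \<in> scale x I"
    then obtain u' v' where "u' \<in> I" "v' \<in> I" "u = x * u'" "v = x * v'" unfolding scale_def by auto
    moreover then have "u' + v' \<in> I" using dmadd[OF I(1)] by blast
    ultimately show "u + v \<in> scale x I" unfolding scale_def
      by (metis distrib_left image_eqI)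
  next
    fix c u assume "c \<in> D" "u \<in> scale x I"
    then obtain u' where "u' \<in> I" "u = x * u'" unfolding scale_def by auto
    moreover have "c * (x * u') = x * (c * u')" by (simp add: mult.left_commute)
    ultimately show "c * u \<in> scale x I" unfolding scale_def using dmmul[OF I(1) \<open>c \<in> D\<close>] by auto
  qed
  moreover have "scale x I \<noteq> {0}"
  proof -
    obtain y where "y \<in> I" "y \<noteq> 0" using frac_ex_nz[OF assms(1)] by blast
    then have "x * y \<in> scale x I" "x * y \<noteq> 0" using assms(2) unfolding scale_def by auto
    then show ?thesis by blast
  qed
  moreover have "(\<lambda>y. (q * d) * y) ` scale x I \<subseteq> D"
  proof
    fix z assume "z \<in> (\<lambda>y. (q * d) * y) ` scale x I"
    then obtain y where y: "y \<in> I" "z = q * d * (x * y)" unfolding scale_def by auto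
    have zz: "z = p * (d * y)" using y pq by (simp add: field_simps)
    have "d * y \<in> D" using y d by blast
    then show "z \<in> D" unfolding zz using pq(1) by (rule Dmul[rotated])
  qed
  moreover have "q * d \<in> D" "q * d \<noteq> 0" using Dmul[OF pq(2) d(1)] pq(3) d(2) by auto
  ultimately show ?thesis unfolding frac_ideal_def
  proof (intro conjI bexI[of _ "q * d"])
  qed assumption+
qed

lemma st_ip:
  assumes X: "frac_ideal D X" and Y: "frac_ideal D Y"
  shows "st (ideal_prod (st X) Y) = st (ideal_prod X Y)"
proof
  show "st (ideal_prod X Y) \<subseteq> st (ideal_prod (st X) Y)"
  proof (rule st_mono)
    show "frac_ideal D (ideal_prod X Y)" "frac_ideal D (ideal_prod (st X) Y)"
      using ip_frac st_frac assms by auto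
    show "ideal_prod X Y \<subseteq> ideal_prod (st X) Y" using ip_mono[OF st_ext[OF X] order_refl] .
  qed
next
  have XY: "frac_ideal D (ideal_prod X Y)" using ip_frac assms by blast
  have dm: "dmodule D (st (ideal_prod X Y))" using frac_dmod st_frac XY by blast
  have "ideal_prod (st X) Y \<subseteq> st (ideal_prod X Y)"
  proof (rule ip_subsetI)
    show "0 \<in> st (ideal_prod X Y)" using dm dm0 by blast
  next
    fix u v assume "u \<in> st (ideal_prod X Y)" "v \<in> st (ideal_prod X Y)"
    then show "u + v \<in> st (ideal_prod X Y)" using dm dmadd by blast
  next
    fix a b assume a: "a \<in> st X" and b: "b \<in> Y"
    show "a * b \<in> st (ideal_prod X Y)"
    proof (cases "b = 0")
      case True then show ?thesis using dm dm0 by simp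
    next
      case False
      have "a * b \<in> scale b (st X)" using a unfolding scale_def by (auto simp: mult.commute)
      also have "scale b (st X) = st (scale b X)" using st_scale[OF False X] by simp
      also have "\<dots> \<subseteq> st (ideal_prod X Y)"
      proof (rule st_mono[OF scale_frac[OF X False] XY])
        show "scale b X \<subseteq> ideal_prod X Y" unfolding scale_def using b
          by (auto simp: mult.commute intro: ip_mult)
      qed
      finally show ?thesis .
    qed
  qed
  then have "st (ideal_prod (st X) Y) \<subseteq> st (st (ideal_prod X Y))"
    by (rule st_mono[rotated 2]) (use ip_frac st_frac assms XY in auto)
  then show "st (ideal_prod (st X) Y) \<subseteq> st (ideal_prod X Y)" using st_idem XY by simp
qed

lemma st_ip2:
  assumes "frac_ideal D X" "frac_ideal D Y"
  shows "st (ideal_prod X (st Y)) = st (ideal_prod X Y)"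
  using st_ip[OF assms(2,1)] by (simp add: ip_comm)

end


definition maxst :: "'k::field set \<Rightarrow> ('k set \<Rightarrow> 'k set) \<Rightarrow> 'k set \<Rightarrow> bool" where
  "maxst D st M \<longleftrightarrow> integral_star_ideal D st M \<and> M \<noteq> D \<and>
     (\<forall>N. integral_star_ideal D st N \<and> N \<noteq> D \<and> M \<subseteq> N \<longrightarrow> N = M)"

context sd begin

lemma gen_mem: "y \<in> gen D F \<longleftrightarrow> (\<exists>c. y = (\<Sum>x\<in>F. c x * x) \<and> (\<forall>x\<in>F. c x \<in> D))"
  unfolding gen_def by blast

lemma gen_dmodule: "dmodule D (gen D F)"
  unfolding dmodule_def
proof (intro conjI ballI)
  show "0 \<in> gen D F" unfolding gen_mem by (rule exI[of _ "\<lambda>_. 0"]) (simp add: D0)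
next
  fix u v assume "u \<in> gen D F" "v \<in> gen D F"
  then obtain c c' where c: "u = (\<Sum>x\<in>F. c x * x)" "\<forall>x\<in>F. c x \<in> D"
    and c': "v = (\<Sum>x\<in>F. c' x * x)" "\<forall>x\<in>F. c' x \<in> D" unfolding gen_mem by blast
  have "u + v = (\<Sum>x\<in>F. (\<lambda>x. c x + c' x) x * x)" unfolding c c'
    by (simp add: sum.distrib distrib_right)
  moreover have "\<forall>x\<in>F. (\<lambda>x. c x + c' x) x \<in> D" using c c' Dadd by blast
  ultimately show "u + v \<in> gen D F" unfolding gen_mem
    by (intro exI[of _ "\<lambda>x. c x + c' x"] conjI) simp_all
next
  fix d u assume d: "d \<in> D" and "u \<in> gen D F"
  then obtain c where c: "u = (\<Sum>x\<in>F. c x * x)" "\<forall>x\<in>F. c x \<in> D" unfolding gen_mem by blast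
  have "d * u = (\<Sum>x\<in>F. (\<lambda>x. d * c x) x * x)" unfolding c
    by (simp add: sum_distrib_left mult.assoc)
  moreover have "\<forall>x\<in>F. (\<lambda>x. d * c x) x \<in> D" using c d Dmul by blast
  ultimately show "d * u \<in> gen D F" unfolding gen_mem
    by (intro exI[of _ "\<lambda>x. d * c x"] conjI) simp_all
qed

lemma gen_sub: assumes "finite F" shows "F \<subseteq> gen D F"
proof
  fix x assume x: "x \<in> F"
  have "(\<Sum>y\<in>F. (\<lambda>y. if y = x then 1 else 0) y * y) = (\<Sum>y\<in>F. if y = x then y else 0)"
    by (rule sum.cong) auto
  also have "\<dots> = x" using sum.delta[OF assms, of x "\<lambda>y. y"] x by simp
  finally have "x = (\<Sum>y\<in>F. (\<lambda>y. if y = x then 1 else 0) y * y)" by simp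
  moreover have "\<forall>y\<in>F. (\<lambda>y. if y = x then 1 else (0::'k)) y \<in> D" using D0 D1 by simp
  ultimately show "x \<in> gen D F" unfolding gen_mem
    by (intro exI[of _ "\<lambda>y. if y = x then 1 else 0"] conjI) simp_all
qed

lemma gen_least: assumes "dmodule D S" "F \<subseteq> S" shows "gen D F \<subseteq> S"
proof
  fix y assume "y \<in> gen D F"
  then obtain c where c: "y = (\<Sum>x\<in>F. c x * x)" "\<forall>x\<in>F. c x \<in> D" unfolding gen_mem by blast
  show "y \<in> S" unfolding c(1)
  proof (rule sum_closed)
    show "0 \<in> S" using dm0[OF assms(1)] .
    show "\<And>u v. u \<in> S \<Longrightarrow> v \<in> S \<Longrightarrow> u + v \<in> S" using dmadd[OF assms(1)] .
    fix x assume "x \<in> F" then show "c x * x \<in> S" using dmmul[OF assms(1)] c(2) assms(2) by blast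
  qed
qed

lemma common_den: "finite F \<Longrightarrow> \<exists>d\<in>D. d \<noteq> 0 \<and> (\<forall>x\<in>F. d * x \<in> D)"
proof (induction F rule: finite_induct)
  case empty then show ?case using D1 by (intro bexI[of _ 1]) auto
next
  case (insert y F)
  then obtain d where d: "d \<in> D" "d \<noteq> 0" "\<forall>x\<in>F. d * x \<in> D" by blast
  obtain p q where pq: "p \<in> D" "q \<in> D" "q \<noteq> 0" "y = p / q" using Dquot by blast
  have "d * q \<in> D" using Dmul[OF d(1) pq(2)] .
  moreover have "d * q \<noteq> 0" using d(2) pq(3) by simp
  moreover have "\<forall>x\<in>insert y F. (d * q) * x \<in> D"
  proof
    fix x assume "x \<in> insert y F"
    then show "(d * q) * x \<in> D"
    proof
      assume "x = y"
      then have qx: "q * x = p" using pq(3,4) by simp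
      have "(d * q) * x = d * (q * x)" by (simp only: mult.assoc)
      then have dq: "(d * q) * x = d * p" by (simp only: qx)
      show ?thesis unfolding dq by (rule Dmul[OF d(1) pq(1)])
    next
      assume "x \<in> F"
      then have "d * x \<in> D" using d(3) by blast
      moreover have eq: "(d * q) * x = q * (d * x)" by (simp only: ac_simps)
      ultimately show ?thesis unfolding eq using Dmul[OF pq(2)] by blast
    qed
  qed
  ultimately show ?case by blast
qed

lemma gen_frac: assumes "finite F" "gen D F \<noteq> {0}" shows "frac_ideal D (gen D F)"
proof -
  obtain d where d: "d \<in> D" "d \<noteq> 0" "\<forall>x\<in>F. d * x \<in> D" using common_den[OF assms(1)] by blast
  have "\<forall>y\<in>gen D F. d * y \<in> D"
  proof
    fix y assume "y \<in> gen D F"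
    then obtain c where c: "y = (\<Sum>x\<in>F. c x * x)" "\<forall>x\<in>F. c x \<in> D" unfolding gen_mem by blast
    have "d * y = (\<Sum>x\<in>F. c x * (d * x))" unfolding c(1)
      by (simp add: sum_distrib_left ac_simps)
    also have "\<dots> \<in> D"
    proof (rule sum_closed)
      show "0 \<in> D" by (rule D0)
      show "\<And>u v. u \<in> D \<Longrightarrow> v \<in> D \<Longrightarrow> u + v \<in> D" by (rule Dadd)
      fix x assume "x \<in> F" then show "c x * (d * x) \<in> D" using Dmul c(2) d(3) by blast
    qed
    finally show "d * y \<in> D" .
  qed
  then have "(\<lambda>x. d * x) ` gen D F \<subseteq> D" by (simp add: image_subset_iff)
  then show ?thesis unfolding frac_ideal_def using gen_dmodule assms(2) d(1,2) by blast
qed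

lemma ft_gen: assumes "finite_type D st I"
  shows "\<exists>F. finite F \<and> gen D F \<noteq> {0} \<and> frac_ideal D (gen D F) \<and> I = st (gen D F)"
proof -
  obtain J where J: "fin_gen D J" "J \<noteq> {0}" "I = st J" using assms unfolding finite_type_def by blast
  obtain F where F: "finite F" "J = gen D F" using J(1) unfolding fin_gen_def by blast
  show ?thesis using F J gen_frac by blast
qed

lemma isi_iff: "integral_star_ideal D st I \<longleftrightarrow> frac_ideal D I \<and> st I = I \<and> I \<subseteq> D"
  unfolding integral_star_ideal_def star_ideal_def by blast

lemma isi_frac: "integral_star_ideal D st I \<Longrightarrow> frac_ideal D I"
  and isi_stI: "integral_star_ideal D st I \<Longrightarrow> st I = I"
  and isi_subD: "integral_star_ideal D st I \<Longrightarrow> I \<subseteq> D"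
  unfolding isi_iff by simp_all

lemma isi_dm: "integral_star_ideal D st I \<Longrightarrow> dmodule D I"
  by (rule frac_dmod[OF isi_frac])

lemma isi_st: assumes "frac_ideal D I" "I \<subseteq> D" shows "integral_star_ideal D st (st I)"
proof -
  have "st I \<subseteq> st D" by (rule st_mono[OF assms(1) frac_D assms(2)])
  then show ?thesis unfolding isi_iff using st_frac[OF assms(1)] st_idem[OF assms(1)] st_D by simp
qed

lemma isi_one: "integral_star_ideal D st I \<Longrightarrow> 1 \<in> I \<Longrightarrow> I = D"
  using one_in_eq[OF isi_dm isi_subD] by blast

lemma isi_D_iff: "integral_star_ideal D st I \<Longrightarrow> I = D \<longleftrightarrow> 1 \<in> I"
  using isi_one D1 by blast

end


context sd begin

lemma exists_max:
  assumes I: "integral_star_ideal D st I" "I \<noteq> D"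
  shows "\<exists>M. maxst D st M \<and> I \<subseteq> M"
proof -
  define \<A> where "\<A> = {N. integral_star_ideal D st N \<and> N \<noteq> D \<and> I \<subseteq> N}"
  have IA: "I \<in> \<A>" using I unfolding \<A>_def by blast
  have "\<exists>M\<in>\<A>. \<forall>X\<in>\<A>. M \<subseteq> X \<longrightarrow> X = M"
  proof (rule subset_Zorn_nonempty)
    show "\<A> \<noteq> {}" using IA by blast
  next
    fix C assume Cne: "C \<noteq> {}" and ch: "subset.chain \<A> C"
    have CA: "C \<subseteq> \<A>" and tot: "\<forall>X\<in>C. \<forall>Y\<in>C. X \<subseteq> Y \<or> Y \<subseteq> X"
      using ch unfolding subset_chain_def by auto
    have mem: "N \<in> C \<Longrightarrow> integral_star_ideal D st N \<and> N \<noteq> D \<and> I \<subseteq> N" for N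
      using CA unfolding \<A>_def by blast
    define U where "U = \<Union>C"
    obtain N0 where N0: "N0 \<in> C" using Cne by blast
    have UD: "U \<subseteq> D" unfolding U_def using mem isi_subD by blast
    have IU: "I \<subseteq> U" unfolding U_def using mem N0 by blast
    have dmN: "N \<in> C \<Longrightarrow> dmodule D N" for N using mem isi_dm by blast
    have dmU: "dmodule D U" unfolding dmodule_def
    proof (intro conjI ballI)
      show "0 \<in> U" unfolding U_def using N0 dmN dm0 by blast
    next
      fix x y assume "x \<in> U" "y \<in> U"
      then obtain N1 N2 where "N1 \<in> C" "N2 \<in> C" "x \<in> N1" "y \<in> N2" unfolding U_def by blast
      note h = this
      show "x + y \<in> U"
      proof (cases "N1 \<subseteq> N2")
        case True
        then have "x + y \<in> N2" using h dmadd[OF dmN[OF h(2)]] by blast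
        then show ?thesis unfolding U_def using h(2) by blast
      next
        case False
        then have "N2 \<subseteq> N1" using tot h(1,2) by blast
        then have "x + y \<in> N1" using h dmadd[OF dmN[OF h(1)]] by blast
        then show ?thesis unfolding U_def using h(1) by blast
      qed
    next
      fix d x assume "d \<in> D" "x \<in> U"
      then show "d * x \<in> U" unfolding U_def using dmN dmmul by blast
    qed
    obtain x where "x \<in> I" "x \<noteq> 0" using frac_ex_nz[OF isi_frac[OF I(1)]] by blast
    then have Unz: "U \<noteq> {0}" using IU by blast
    have Ufrac: "frac_ideal D U" using int_frac[OF dmU UD Unz] .
    have "1 \<notin> U"
    proof
      assume "1 \<in> U"
      then obtain N where "N \<in> C" "1 \<in> N" unfolding U_def by blast
      then show False using mem isi_one by blast
    qed
    then have UneD: "U \<noteq> D" using D1 by blast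
    have "st U \<subseteq> U"
    proof
      fix z assume "z \<in> st U"
      then obtain J where J: "z \<in> st J" "J \<subseteq> U" "fin_gen D J" "J \<noteq> {0}"
        using fc'[OF Ufrac] by blast
      obtain F where F: "finite F" "J = gen D F" using J(3) unfolding fin_gen_def by blast
      have "F \<subseteq> U" using gen_sub[OF F(1)] F(2) J(2) by blast
      then obtain N where N: "N \<in> C" "F \<subseteq> N"
        using finite_subset_Union_chain[OF F(1) _ Cne ch] unfolding U_def by blast
      have JN: "J \<subseteq> N" unfolding F(2) using gen_least[OF dmN[OF N(1)] N(2)] .
      have Nisi: "integral_star_ideal D st N" using mem N(1) by blast
      have NU: "N \<subseteq> U" unfolding U_def using N(1) by blast
      have Jfrac: "frac_ideal D J" using gen_frac[OF F(1)] F(2) J(4) by simp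
      have "st J \<subseteq> st N" using st_mono[OF Jfrac isi_frac[OF Nisi] JN] .
      also have "st N = N" using isi_stI[OF Nisi] .
      finally show "z \<in> U" using J(1) NU by blast
    qed
    then have "st U = U" using st_ext[OF Ufrac] by blast
    then have "integral_star_ideal D st U" unfolding isi_iff using Ufrac UD by blast
    then show "\<Union>C \<in> \<A>" unfolding \<A>_def U_def[symmetric] using UneD IU by blast
  qed
  then obtain M where M: "M \<in> \<A>" "\<forall>X\<in>\<A>. M \<subseteq> X \<longrightarrow> X = M" by blast
  have "maxst D st M" unfolding maxst_def
  proof (intro conjI allI impI)
    show "integral_star_ideal D st M" "M \<noteq> D" using M(1) unfolding \<A>_def by blast+
  next
    fix N assume "integral_star_ideal D st N \<and> N \<noteq> D \<and> M \<subseteq> N"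
    moreover have "I \<subseteq> M" using M(1) unfolding \<A>_def by blast
    ultimately have "N \<in> \<A>" unfolding \<A>_def by blast
    then show "N = M" using M(2) \<open>integral_star_ideal D st N \<and> N \<noteq> D \<and> M \<subseteq> N\<close> by blast
  qed
  moreover have "I \<subseteq> M" using M(1) unfolding \<A>_def by blast
  ultimately show ?thesis by blast
qed

lemma maxst_isi: "maxst D st M \<Longrightarrow> integral_star_ideal D st M"
  and maxst_ne: "maxst D st M \<Longrightarrow> M \<noteq> D"
  unfolding maxst_def by blast+

lemma maxst_frac: "maxst D st M \<Longrightarrow> frac_ideal D M"
  and maxst_sub: "maxst D st M \<Longrightarrow> M \<subseteq> D"
  and maxst_st: "maxst D st M \<Longrightarrow> st M = M"
  using isi_frac isi_subD isi_stI maxst_isi by blast+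

lemma maxst_dm: "maxst D st M \<Longrightarrow> dmodule D M"
  using maxst_frac frac_dmod by blast

lemma maxst_1: "maxst D st M \<Longrightarrow> 1 \<notin> M"
  using maxst_isi maxst_ne isi_one by blast

lemma maxst_eq: "maxst D st M \<Longrightarrow> integral_star_ideal D st N \<Longrightarrow> N \<noteq> D \<Longrightarrow> M \<subseteq> N \<Longrightarrow> N = M"
  unfolding maxst_def by blast

lemma principal_dm: "a \<in> D \<Longrightarrow> dmodule D (principal D a)"
  unfolding dmodule_def principal_def
proof (intro conjI ballI)
  show "0 \<in> {d * a |d. d \<in> D}" using D0 by force
next
  fix x y assume "x \<in> {d * a |d. d \<in> D}" "y \<in> {d * a |d. d \<in> D}"
  then obtain d e where "x = d * a" "y = e * a" "d \<in> D" "e \<in> D" by blast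
  then have "x + y = (d + e) * a" "d + e \<in> D" using Dadd by (simp_all add: distrib_right)
  then show "x + y \<in> {d * a |d. d \<in> D}" by blast
next
  fix c x assume "c \<in> D" "x \<in> {d * a |d. d \<in> D}"
  then obtain d where "x = d * a" "d \<in> D" by blast
  then have "c * x = (c * d) * a" "c * d \<in> D" using Dmul[OF \<open>c \<in> D\<close>] by (simp_all add: mult.assoc)
  then show "c * x \<in> {d * a |d. d \<in> D}" by blast
qed

lemma sum_dm: assumes I: "dmodule D I" and J: "dmodule D J" shows "dmodule D (ideal_sum I J)"
  unfolding dmodule_def ideal_sum_def
proof (intro conjI ballI)
  have "(0::'k) = 0 + 0" by simp
  then show "0 \<in> {a + b |a b. a \<in> I \<and> b \<in> J}" using dm0[OF I] dm0[OF J] by blast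
next
  fix x y assume "x \<in> {a + b |a b. a \<in> I \<and> b \<in> J}" "y \<in> {a + b |a b. a \<in> I \<and> b \<in> J}"
  then obtain a b a' b' where ab: "x = a + b" "y = a' + b'" "a \<in> I" "b \<in> J" "a' \<in> I" "b' \<in> J" by blast
  have "x + y = (a + a') + (b + b')" unfolding ab(1,2) by (simp add: ac_simps)
  moreover have "a + a' \<in> I" "b + b' \<in> J" using ab dmadd I J by blast+
  ultimately show "x + y \<in> {a + b |a b. a \<in> I \<and> b \<in> J}" by blast
next
  fix d x assume d: "d \<in> D" and "x \<in> {a + b |a b. a \<in> I \<and> b \<in> J}"
  then obtain a b where ab: "x = a + b" "a \<in> I" "b \<in> J" by blast
  have "d * x = d * a + d * b" unfolding ab(1) by (simp add: distrib_left)
  moreover have "d * a \<in> I" "d * b \<in> J" using ab d dmmul I J by blast+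
  ultimately show "d * x \<in> {a + b |a b. a \<in> I \<and> b \<in> J}" by blast
qed

lemma sum_left: "dmodule D J \<Longrightarrow> I \<subseteq> ideal_sum I J"
  unfolding ideal_sum_def using dm0 by force

lemma sum_right: "dmodule D I \<Longrightarrow> J \<subseteq> ideal_sum I J"
  unfolding ideal_sum_def using dm0 by force

lemma sum_comm: "ideal_sum I J = ideal_sum J (I :: 'k set)"
proof -
  have "ideal_sum I J \<subseteq> ideal_sum J I" for I J :: "'k set"
  proof
    fix x assume "x \<in> ideal_sum I J"
    then obtain a b where "x = a + b" "a \<in> I" "b \<in> J" unfolding ideal_sum_def by blast
    moreover then have "x = b + a" by (simp add: add.commute)
    ultimately show "x \<in> ideal_sum J I" unfolding ideal_sum_def by blast
  qed
  then show ?thesis by (rule equalityI) fact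
qed

lemma sum_least: "dmodule D S \<Longrightarrow> I \<subseteq> S \<Longrightarrow> J \<subseteq> S \<Longrightarrow> ideal_sum I J \<subseteq> S"
  unfolding ideal_sum_def using dmadd by blast

lemma sum_mono: "I \<subseteq> I' \<Longrightarrow> J \<subseteq> J' \<Longrightarrow> ideal_sum I J \<subseteq> ideal_sum I' J'"
  unfolding ideal_sum_def by blast

lemma sum_int_frac:
  assumes "frac_ideal D I" "I \<subseteq> D" "dmodule D J" "J \<subseteq> D"
  shows "frac_ideal D (ideal_sum I J)"
proof (rule int_frac)
  show "dmodule D (ideal_sum I J)" using sum_dm frac_dmod assms by blast
  show "ideal_sum I J \<subseteq> D" using sum_least[OF dmodule_D assms(2,4)] .
  show "ideal_sum I J \<noteq> {0}" using sum_left[OF assms(3)] frac_nz[OF assms(1)] frac_dmod[OF assms(1)] dm0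
    by blast
qed

lemma max_extend:
  assumes M: "maxst D st M" and a: "a \<in> D" "a \<notin> M"
  shows "st (ideal_sum M (principal D a)) = D"
proof -
  let ?P = "ideal_sum M (principal D a)"
  have pd: "dmodule D (principal D a)" using principal_dm[OF a(1)] .
  have psub: "principal D a \<subseteq> D" unfolding principal_def using Dmul a(1) by blast
  have Pf: "frac_ideal D ?P" using sum_int_frac[OF maxst_frac[OF M] maxst_sub[OF M] pd psub] .
  have PD: "?P \<subseteq> D" using sum_least[OF dmodule_D maxst_sub[OF M] psub] .
  have isi: "integral_star_ideal D st (st ?P)" using isi_st[OF Pf PD] .
  have "a \<in> principal D a" unfolding principal_def using D1 by force
  then have "a \<in> st ?P" using sum_right[OF maxst_dm[OF M]] st_ext[OF Pf] by blast
  moreover have "M \<subseteq> st ?P" using sum_left[OF pd] st_ext[OF Pf] by blast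
  ultimately show ?thesis using maxst_eq[OF M isi] a(2) by blast
qed

lemma prime_elt:
  assumes M: "maxst D st M" and ab: "a \<in> D" "b \<in> D" "a \<notin> M" "b \<notin> M"
  shows "a * b \<notin> M"
proof
  assume abM: "a * b \<in> M"
  let ?P = "ideal_sum M (principal D a)" and ?Q = "ideal_sum M (principal D b)"
  have psub: "principal D x \<subseteq> D" if "x \<in> D" for x unfolding principal_def using Dmul that by blast
  have Pf: "frac_ideal D ?P" using sum_int_frac[OF maxst_frac[OF M] maxst_sub[OF M] principal_dm psub] ab by blast
  have Qf: "frac_ideal D ?Q" using sum_int_frac[OF maxst_frac[OF M] maxst_sub[OF M] principal_dm psub] ab by blast
  have sP: "st ?P = D" using max_extend[OF M ab(1,3)] .
  have sQ: "st ?Q = D" using max_extend[OF M ab(2,4)] .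
  have "st (ideal_prod ?P ?Q) = st (ideal_prod (st ?P) ?Q)" using st_ip[OF Pf Qf] by simp
  also have "\<dots> = st (ideal_prod (st ?P) (st ?Q))" using st_ip2[OF st_frac[OF Pf] Qf] by simp
  also have "\<dots> = D" unfolding sP sQ ip_D_right[OF dmodule_D] by (rule st_D)
  finally have eqD: "st (ideal_prod ?P ?Q) = D" .
  have dmM: "dmodule D M" using maxst_dm[OF M] .
  have MD: "M \<subseteq> D" using maxst_sub[OF M] .
  have "ideal_prod ?P ?Q \<subseteq> M"
  proof (rule ip_subsetI)
    show "0 \<in> M" using dm0[OF dmM] .
    show "\<And>u v. u \<in> M \<Longrightarrow> v \<in> M \<Longrightarrow> u + v \<in> M" using dmadd[OF dmM] .
  next
    fix x y assume "x \<in> ?P" "y \<in> ?Q"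
    then obtain m d m' d' where mx: "x = m + d * a" "m \<in> M" "d \<in> D"
      and my: "y = m' + d' * b" "m' \<in> M" "d' \<in> D"
      unfolding ideal_sum_def principal_def by blast
    have eq: "x * y = m' * m + (d' * b) * m + (d * a) * m' + (d * d') * (a * b)"
      unfolding mx(1) my(1) by algebra
    have 1: "m' * m \<in> M" using dmmul[OF dmM] mx(2) my(2) MD by blast
    have 2: "(d' * b) * m \<in> M" using dmmul[OF dmM _ mx(2)] Dmul[OF my(3) ab(2)] by blast
    have 3: "(d * a) * m' \<in> M" using dmmul[OF dmM _ my(2)] Dmul[OF mx(3) ab(1)] by blast
    have 4: "(d * d') * (a * b) \<in> M" using dmmul[OF dmM _ abM] Dmul[OF mx(3) my(3)] by blast
    show "x * y \<in> M" unfolding eq using 1 2 3 4 dmadd[OF dmM] by blast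
  qed
  then have "st (ideal_prod ?P ?Q) \<subseteq> st M"
    using st_mono[OF ip_frac[OF Pf Qf] maxst_frac[OF M]] by blast
  then have "D \<subseteq> M" using eqD maxst_st[OF M] by simp
  then show False using maxst_1[OF M] D1 by blast
qed

lemma prime_sets:
  assumes M: "maxst D st M" and "X \<subseteq> D" "Y \<subseteq> D" "ideal_prod X Y \<subseteq> M"
  shows "X \<subseteq> M \<or> Y \<subseteq> M"
proof (rule ccontr)
  assume "\<not> (X \<subseteq> M \<or> Y \<subseteq> M)"
  then obtain a b where "a \<in> X" "a \<notin> M" "b \<in> Y" "b \<notin> M" by blast
  moreover then have "a * b \<in> M" using ip_mult assms(4) by blast
  ultimately show False using prime_elt[OF M] assms(2,3) by blast
qed

end


context sd begin

lemma homog_isi: "star_homog D st I \<Longrightarrow> integral_star_ideal D st I"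
  unfolding star_homog_def by (rule conjunct1)
lemma homog_ft: "star_homog D st I \<Longrightarrow> finite_type D st I"
  unfolding star_homog_def by (rule conjunct1[OF conjunct2])
lemma homog_ne: "star_homog D st I \<Longrightarrow> I \<noteq> D"
  unfolding star_homog_def by (rule conjunct1[OF conjunct2[OF conjunct2]])

lemma homog_frac: "star_homog D st I \<Longrightarrow> frac_ideal D I"
  and homog_sub: "star_homog D st I \<Longrightarrow> I \<subseteq> D"
  and homog_st: "star_homog D st I \<Longrightarrow> st I = I"
  using isi_frac isi_subD isi_stI homog_isi by blast+

lemma homog_dm: "star_homog D st I \<Longrightarrow> dmodule D I"
  using homog_frac frac_dmod by blast

lemma homog_max: "star_homog D st I \<Longrightarrow> \<exists>M. maxst D st M \<and> I \<subseteq> M"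
  using exists_max homog_isi homog_ne by blast

lemma homog_cond:
  assumes "star_homog D st I"
    "integral_star_ideal D st J" "finite_type D st J" "J \<noteq> D" "I \<subseteq> J"
    "integral_star_ideal D st L" "finite_type D st L" "L \<noteq> D" "I \<subseteq> L"
  shows "st (ideal_sum J L) \<noteq> D"
proof -
  have H: "\<forall>J L. integral_star_ideal D st J \<and> finite_type D st J \<and> J \<noteq> D \<and> I \<subseteq> J \<and>
            integral_star_ideal D st L \<and> finite_type D st L \<and> L \<noteq> D \<and> I \<subseteq> L
        \<longrightarrow> st (ideal_sum J L) \<noteq> D"
    using assms(1) unfolding star_homog_def by (rule conjunct2[OF conjunct2[OF conjunct2]])
  have "integral_star_ideal D st J \<and> finite_type D st J \<and> J \<noteq> D \<and> I \<subseteq> J \<and>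
            integral_star_ideal D st L \<and> finite_type D st L \<and> L \<noteq> D \<and> I \<subseteq> L"
    using assms(2-9) by (intro conjI)
  then show ?thesis using H[rule_format] by blast
qed

lemma isi_sum_frac: "integral_star_ideal D st X \<Longrightarrow> integral_star_ideal D st Y \<Longrightarrow> frac_ideal D (ideal_sum X Y)"
  using sum_int_frac[OF isi_frac isi_subD isi_dm isi_subD] by blast

lemma isi_sum_sub: "integral_star_ideal D st X \<Longrightarrow> integral_star_ideal D st Y \<Longrightarrow> ideal_sum X Y \<subseteq> D"
  using sum_least[OF dmodule_D isi_subD isi_subD] by blast

lemma comax_not_common:
  assumes M: "maxst D st M" and X: "integral_star_ideal D st X" "X \<subseteq> M"
    and Y: "integral_star_ideal D st Y" "Y \<subseteq> M" and eq: "st (ideal_sum X Y) = D"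
  shows False
proof -
  have "ideal_sum X Y \<subseteq> M" using sum_least[OF maxst_dm[OF M] X(2) Y(2)] .
  then have "st (ideal_sum X Y) \<subseteq> st M" using st_mono[OF isi_sum_frac[OF X(1) Y(1)] maxst_frac[OF M]] by blast
  then have "D \<subseteq> M" using eq maxst_st[OF M] by simp
  then show False using maxst_1[OF M] D1 by blast
qed

lemma comax_common:
  assumes X: "integral_star_ideal D st X" and Y: "integral_star_ideal D st Y"
    and ne: "st (ideal_sum X Y) \<noteq> D"
  shows "\<exists>M. maxst D st M \<and> X \<subseteq> M \<and> Y \<subseteq> M"
proof -
  have Sf: "frac_ideal D (ideal_sum X Y)" using isi_sum_frac[OF X Y] .
  have isi: "integral_star_ideal D st (st (ideal_sum X Y))" using isi_st[OF Sf isi_sum_sub[OF X Y]] .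
  obtain M where M: "maxst D st M" "st (ideal_sum X Y) \<subseteq> M" using exists_max[OF isi ne] by blast
  have "X \<subseteq> ideal_sum X Y" using sum_left[OF isi_dm[OF Y]] by blast
  moreover have "Y \<subseteq> ideal_sum X Y" using sum_right[OF isi_dm[OF X]] by blast
  ultimately show ?thesis using M st_ext[OF Sf] by blast
qed

lemma homog_unique:
  assumes I: "star_homog D st I" and M1: "maxst D st M1" "I \<subseteq> M1" and M2: "maxst D st M2" "I \<subseteq> M2"
  shows "M1 = M2"
proof (rule ccontr)
  assume ne: "M1 \<noteq> M2"
  let ?S = "ideal_sum M1 M2"
  have Sf: "frac_ideal D ?S" using isi_sum_frac[OF maxst_isi[OF M1(1)] maxst_isi[OF M2(1)]] .
  have isi: "integral_star_ideal D st (st ?S)"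
    using isi_st[OF Sf isi_sum_sub[OF maxst_isi[OF M1(1)] maxst_isi[OF M2(1)]]] .
  have "st ?S = D"
  proof (rule ccontr)
    assume "st ?S \<noteq> D"
    then obtain M where M: "maxst D st M" "M1 \<subseteq> M" "M2 \<subseteq> M"
      using comax_common[OF maxst_isi[OF M1(1)] maxst_isi[OF M2(1)]] by blast
    have "M = M1" using maxst_eq[OF M1(1) maxst_isi[OF M(1)] maxst_ne[OF M(1)] M(2)] .
    moreover have "M = M2" using maxst_eq[OF M2(1) maxst_isi[OF M(1)] maxst_ne[OF M(1)] M(3)] .
    ultimately show False using ne by simp
  qed
  then have "1 \<in> st ?S" using D1 by simp
  then obtain J where J: "1 \<in> st J" "J \<subseteq> ?S" "fin_gen D J" "J \<noteq> {0}"
    using fc'[OF Sf] by blast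
  obtain F where F: "finite F" "J = gen D F" using J(3) unfolding fin_gen_def by blast
  have "\<forall>f\<in>F. \<exists>p. f = fst p + snd p \<and> fst p \<in> M1 \<and> snd p \<in> M2"
  proof
    fix f assume "f \<in> F"
    then have "f \<in> ?S" using gen_sub[OF F(1)] F(2) J(2) by blast
    then obtain a b where "f = a + b" "a \<in> M1" "b \<in> M2" unfolding ideal_sum_def by blast
    then show "\<exists>p. f = fst p + snd p \<and> fst p \<in> M1 \<and> snd p \<in> M2" by (intro exI[of _ "(a, b)"]) simp
  qed
  then obtain g where g: "\<forall>f\<in>F. f = fst (g f) + snd (g f) \<and> fst (g f) \<in> M1 \<and> snd (g f) \<in> M2"
    by (rule bchoice[elim_format]) blast
  obtain G where G: "finite G" "gen D G \<noteq> {0}" "frac_ideal D (gen D G)" "I = st (gen D G)"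
    using ft_gen[OF homog_ft[OF I]] by blast
  have GI: "gen D G \<subseteq> I" using st_ext[OF G(3)] G(4) by blast
  have GsubI: "G \<subseteq> I" using gen_sub[OF G(1)] GI by blast
  define F1 where "F1 = (\<lambda>f. fst (g f)) ` F \<union> G"
  define F2 where "F2 = (\<lambda>f. snd (g f)) ` F \<union> G"
  have L: "integral_star_ideal D st (st (gen D Fi)) \<and> finite_type D st (st (gen D Fi)) \<and>
      st (gen D Fi) \<noteq> D \<and> I \<subseteq> st (gen D Fi) \<and> gen D Fi \<subseteq> st (gen D Fi)"
    if Fi: "finite Fi" "G \<subseteq> Fi" "Fi \<subseteq> Mi" and Mi: "maxst D st Mi" "I \<subseteq> Mi" for Fi Mi
  proof -
    have GF: "gen D G \<subseteq> gen D Fi" using gen_least[OF gen_dmodule] gen_sub[OF Fi(1)] Fi(2) by blast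
    have nz: "gen D Fi \<noteq> {0}" using GF G(2) frac_ex_nz[OF G(3)] by blast
    have fr: "frac_ideal D (gen D Fi)" using gen_frac[OF Fi(1) nz] .
    have sub: "gen D Fi \<subseteq> Mi" using gen_least[OF maxst_dm[OF Mi(1)] Fi(3)] .
    have stsub: "st (gen D Fi) \<subseteq> Mi" using st_mono[OF fr maxst_frac[OF Mi(1)] sub] maxst_st[OF Mi(1)] by simp
    have isi: "integral_star_ideal D st (st (gen D Fi))" using isi_st[OF fr] sub maxst_sub[OF Mi(1)] by blast
    have ft: "finite_type D st (st (gen D Fi))" unfolding finite_type_def fin_gen_def using Fi(1) nz by blast
    have "st (gen D Fi) \<noteq> D" using stsub maxst_1[OF Mi(1)] D1 by blast
    moreover have "I \<subseteq> st (gen D Fi)" using st_mono[OF G(3) fr GF] G(4) by simp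
    ultimately show ?thesis using isi ft st_ext[OF fr] by blast
  qed
  have F1s: "finite F1" "G \<subseteq> F1" "F1 \<subseteq> M1" unfolding F1_def using F(1) G(1) g GsubI M1(2) by auto
  have F2s: "finite F2" "G \<subseteq> F2" "F2 \<subseteq> M2" unfolding F2_def using F(1) G(1) g GsubI M2(2) by auto
  have L1: "integral_star_ideal D st (st (gen D F1)) \<and> finite_type D st (st (gen D F1)) \<and>
      st (gen D F1) \<noteq> D \<and> I \<subseteq> st (gen D F1) \<and> gen D F1 \<subseteq> st (gen D F1)"
    using L[OF F1s M1] .
  have L2: "integral_star_ideal D st (st (gen D F2)) \<and> finite_type D st (st (gen D F2)) \<and>
      st (gen D F2) \<noteq> D \<and> I \<subseteq> st (gen D F2) \<and> gen D F2 \<subseteq> st (gen D F2)"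
    using L[OF F2s M2] .
  have nD: "st (ideal_sum (st (gen D F1)) (st (gen D F2))) \<noteq> D"
    using homog_cond[OF I] L1 L2 by blast
  have Jsub: "J \<subseteq> ideal_sum (gen D F1) (gen D F2)"
    unfolding F(2)
  proof (rule gen_least[OF sum_dm[OF gen_dmodule gen_dmodule]])
    show "F \<subseteq> ideal_sum (gen D F1) (gen D F2)"
    proof
      fix f assume f: "f \<in> F"
      have "fst (g f) \<in> gen D F1" using gen_sub[OF F1s(1)] f unfolding F1_def by blast
      moreover have "snd (g f) \<in> gen D F2" using gen_sub[OF F2s(1)] f unfolding F2_def by blast
      moreover have "f = fst (g f) + snd (g f)" using g f by blast
      ultimately show "f \<in> ideal_sum (gen D F1) (gen D F2)" unfolding ideal_sum_def by blast
    qed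
  qed
  also have "\<dots> \<subseteq> ideal_sum (st (gen D F1)) (st (gen D F2))" using sum_mono L1 L2 by blast
  finally have Jsub2: "J \<subseteq> ideal_sum (st (gen D F1)) (st (gen D F2))" .
  have Jf: "frac_ideal D J" using gen_frac[OF F(1)] F(2) J(4) by simp
  have Tf: "frac_ideal D (ideal_sum (st (gen D F1)) (st (gen D F2)))" using isi_sum_frac L1 L2 by blast
  have Tisi: "integral_star_ideal D st (st (ideal_sum (st (gen D F1)) (st (gen D F2))))"
    using isi_st[OF Tf isi_sum_sub] L1 L2 by blast
  have "1 \<in> st (ideal_sum (st (gen D F1)) (st (gen D F2)))" using st_mono[OF Jf Tf Jsub2] J(1) by blast
  then show False using isi_one[OF Tisi] nD by blast
qed

lemma homog_char:
  assumes X: "integral_star_ideal D st X" "finite_type D st X" "X \<noteq> D"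
    and uniq: "\<And>N1 N2. maxst D st N1 \<Longrightarrow> maxst D st N2 \<Longrightarrow> X \<subseteq> N1 \<Longrightarrow> X \<subseteq> N2 \<Longrightarrow> N1 = N2"
  shows "star_homog D st X"
  unfolding star_homog_def
proof (intro conjI allI impI)
  show "integral_star_ideal D st X" "finite_type D st X" "X \<noteq> D" by (fact X)+
next
  fix J L assume h: "integral_star_ideal D st J \<and> finite_type D st J \<and> J \<noteq> D \<and> X \<subseteq> J \<and>
            integral_star_ideal D st L \<and> finite_type D st L \<and> L \<noteq> D \<and> X \<subseteq> L"
  show "st (ideal_sum J L) \<noteq> D"
  proof
    assume eq: "st (ideal_sum J L) = D"
    have hJ: "integral_star_ideal D st J" "J \<noteq> D" "X \<subseteq> J" using h by blast+
    have hL: "integral_star_ideal D st L" "L \<noteq> D" "X \<subseteq> L" using h by blast+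
    obtain N1 where N1: "maxst D st N1" "J \<subseteq> N1" using exists_max[OF hJ(1,2)] by blast
    obtain N2 where N2: "maxst D st N2" "L \<subseteq> N2" using exists_max[OF hL(1,2)] by blast
    have "X \<subseteq> N1" "X \<subseteq> N2" using N1(2) N2(2) hJ(3) hL(3) by blast+
    then have "N1 = N2" using uniq[OF N1(1) N2(1)] by blast
    then have "L \<subseteq> N1" using N2(2) by simp
    then show False using comax_not_common[OF N1(1) hJ(1) N1(2) hL(1) _ eq] by blast
  qed
qed

lemma gen_prod:
  assumes F: "finite F" and G: "finite G"
  shows "ideal_prod (gen D F) (gen D G) = gen D ((\<lambda>p. fst p * snd p) ` (F \<times> G))"
    (is "_ = gen D ?H")
proof
  have Hf: "finite ?H" using F G by simp
  have dH: "dmodule D (gen D ?H)" by (rule gen_dmodule)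
  have Hs: "?H \<subseteq> gen D ?H" using gen_sub[OF Hf] .
  show "ideal_prod (gen D F) (gen D G) \<subseteq> gen D ?H"
  proof (rule ip_subsetI)
    show "0 \<in> gen D ?H" using dm0[OF dH] .
    show "\<And>u v. u \<in> gen D ?H \<Longrightarrow> v \<in> gen D ?H \<Longrightarrow> u + v \<in> gen D ?H" using dmadd[OF dH] .
  next
    fix a b assume a: "a \<in> gen D F" and b: "b \<in> gen D G"
    obtain c where c: "a = (\<Sum>x\<in>F. c x * x)" "\<forall>x\<in>F. c x \<in> D" using a unfolding gen_mem by blast
    obtain e where e: "b = (\<Sum>y\<in>G. e y * y)" "\<forall>y\<in>G. e y \<in> D" using b unfolding gen_mem by blast
    have fb: "f * b \<in> gen D ?H" if f: "f \<in> F" for f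
    proof -
      have "f * b = (\<Sum>y\<in>G. e y * (f * y))" unfolding e(1) by (simp add: sum_distrib_left ac_simps)
      also have "\<dots> \<in> gen D ?H"
      proof (rule sum_closed[OF dm0[OF dH] dmadd[OF dH]])
        fix y assume y: "y \<in> G"
        have "f * y \<in> ?H" using f y by (intro image_eqI[of _ _ "(f, y)"]) auto
        then show "e y * (f * y) \<in> gen D ?H" using dmmul[OF dH] e(2) y Hs by blast
      qed
      finally show ?thesis .
    qed
    have "a * b = (\<Sum>x\<in>F. (c x * x) * b)" unfolding c(1) by (rule sum_distrib_right)
    also have "\<dots> = (\<Sum>x\<in>F. c x * (x * b))" by (simp only: mult.assoc)
    also have "\<dots> \<in> gen D ?H"
    proof (rule sum_closed[OF dm0[OF dH] dmadd[OF dH]])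
      fix x assume "x \<in> F"
      then show "c x * (x * b) \<in> gen D ?H" using dmmul[OF dH] c(2) fb by blast
    qed
    finally show "a * b \<in> gen D ?H" .
  qed
next
  show "gen D ?H \<subseteq> ideal_prod (gen D F) (gen D G)"
  proof (rule gen_least[OF ip_dmodule[OF gen_dmodule]])
    show "?H \<subseteq> ideal_prod (gen D F) (gen D G)"
    proof
      fix z assume "z \<in> ?H"
      then obtain f g where fg: "f \<in> F" "g \<in> G" "z = f * g" by auto
      have "f \<in> gen D F" "g \<in> gen D G" using gen_sub[OF F] gen_sub[OF G] fg by blast+
      then show "z \<in> ideal_prod (gen D F) (gen D G)" unfolding fg(3) by (rule ip_mult)
    qed
  qed
qed

lemma homog_prod:
  assumes I: "star_homog D st I" and J: "star_homog D st J"
    and M: "maxst D st M" "I \<subseteq> M" "J \<subseteq> M"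
  shows "star_homog D st (st (ideal_prod I J)) \<and> st (ideal_prod I J) \<subseteq> M"
proof -
  have IJf: "frac_ideal D (ideal_prod I J)" using ip_frac[OF homog_frac[OF I] homog_frac[OF J]] .
  have IJI: "ideal_prod I J \<subseteq> I" using ip_sub_left[OF homog_dm[OF I] homog_sub[OF J]] .
  have IJD: "ideal_prod I J \<subseteq> D" using IJI homog_sub[OF I] by (rule order_trans)
  have isi: "integral_star_ideal D st (st (ideal_prod I J))" using isi_st[OF IJf IJD] .
  have stI: "st (ideal_prod I J) \<subseteq> I"
    using st_mono[OF IJf homog_frac[OF I] IJI] unfolding homog_st[OF I] .
  have ne: "st (ideal_prod I J) \<noteq> D"
  proof
    assume "st (ideal_prod I J) = D"
    then have "D \<subseteq> I" using stI by simp
    then have "I = D" using homog_sub[OF I] by (rule equalityI[rotated])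
    then show False using homog_ne[OF I] by contradiction
  qed
  obtain F where F: "finite F" "gen D F \<noteq> {0}" "frac_ideal D (gen D F)" "I = st (gen D F)"
    using ft_gen[OF homog_ft[OF I]] by blast
  obtain G where G: "finite G" "gen D G \<noteq> {0}" "frac_ideal D (gen D G)" "J = st (gen D G)"
    using ft_gen[OF homog_ft[OF J]] by blast
  define H where "H = (\<lambda>p. fst p * snd p) ` (F \<times> G)"
  have Hfin: "finite H" unfolding H_def using F(1) G(1) by simp
  have gp: "ideal_prod (gen D F) (gen D G) = gen D H" unfolding H_def by (rule gen_prod[OF F(1) G(1)])
  have "st (ideal_prod I J) = st (ideal_prod (gen D F) (st (gen D G)))"
    unfolding F(4) G(4) by (rule st_ip[OF F(3) st_frac[OF G(3)]])
  also have "\<dots> = st (ideal_prod (gen D F) (gen D G))" by (rule st_ip2[OF F(3) G(3)])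
  finally have eq: "st (ideal_prod I J) = st (gen D H)" unfolding gp .
  have "frac_ideal D (gen D H)" using ip_frac[OF F(3) G(3)] unfolding gp .
  then have Hnz: "gen D H \<noteq> {0}" by (rule frac_nz)
  have "fin_gen D (gen D H)" unfolding fin_gen_def using Hfin by blast
  then have ft: "finite_type D st (st (ideal_prod I J))"
    unfolding finite_type_def eq using Hnz by blast
  have sub: "st (ideal_prod I J) \<subseteq> M" using stI M(2) by (rule order_trans)
  have uniq: "N = M" if N: "maxst D st N" "st (ideal_prod I J) \<subseteq> N" for N
  proof -
    have "ideal_prod I J \<subseteq> N" using st_ext[OF IJf] N(2) by (rule order_trans)
    then have "I \<subseteq> N \<or> J \<subseteq> N" by (rule prime_sets[OF N(1) homog_sub[OF I] homog_sub[OF J]])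
    then show "N = M"
    proof
      assume "I \<subseteq> N" then show "N = M" by (rule homog_unique[OF I N(1) _ M(1,2)])
    next
      assume "J \<subseteq> N" then show "N = M" by (rule homog_unique[OF J N(1) _ M(1,3)])
    qed
  qed
  have "star_homog D st (st (ideal_prod I J))"
  proof (rule homog_char[OF isi ft ne])
    fix N1 N2 assume h: "maxst D st N1" "maxst D st N2" "st (ideal_prod I J) \<subseteq> N1" "st (ideal_prod I J) \<subseteq> N2"
    have "N1 = M" using uniq[OF h(1,3)] .
    moreover have "N2 = M" using uniq[OF h(2,4)] .
    ultimately show "N1 = N2" by simp
  qed
  then show ?thesis using sub by (rule conjI)
qed

end


lemma mset_remove1_cons: "x \<in> set xs \<Longrightarrow> mset (x # remove1 x xs) = mset xs"
  by simp

definition loc :: "'k::field set \<Rightarrow> 'k set \<Rightarrow> 'k set \<Rightarrow> 'k set" where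
  "loc D A M = {x \<in> D. \<exists>s\<in>D. s \<notin> M \<and> s * x \<in> A}"

context sd begin

definition setcomax :: "'k set list \<Rightarrow> bool" where
  "setcomax Ks \<longleftrightarrow> (\<forall>J\<in>set Ks. \<forall>K\<in>set Ks. J \<noteq> K \<longrightarrow> st (ideal_sum J K) = D)"

lemma prod_cons: "ideal_prod_list D (x # xs) = ideal_prod x (ideal_prod_list D xs)"
  and prod_nil: "ideal_prod_list D [] = D"
  unfolding ideal_prod_list_def by simp_all

lemma prod_props:
  "(\<forall>K\<in>set Ks. star_homog D st K) \<Longrightarrow> frac_ideal D (ideal_prod_list D Ks) \<and> ideal_prod_list D Ks \<subseteq> D"
proof (induction Ks)
  case Nil then show ?case unfolding prod_nil using frac_D by simp
next
  case (Cons K Ks)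
  then have K: "star_homog D st K" and P: "frac_ideal D (ideal_prod_list D Ks)" "ideal_prod_list D Ks \<subseteq> D"
    by simp_all
  have "frac_ideal D (ideal_prod K (ideal_prod_list D Ks))" using ip_frac[OF homog_frac[OF K] P(1)] .
  moreover have "ideal_prod K (ideal_prod_list D Ks) \<subseteq> D"
    using ip_sub_left[OF homog_dm[OF K] P(2)] homog_sub[OF K] by (rule order_trans)
  ultimately show ?case unfolding prod_cons by (rule conjI)
qed

lemma prod_remove:
  assumes "K \<in> set Ks"
  shows "ideal_prod_list D Ks = ideal_prod K (ideal_prod_list D (remove1 K Ks))"
proof -
  have "ideal_prod_list D Ks = ideal_prod_list D (K # remove1 K Ks)"
    by (rule prod_list_mset) (simp add: assms)
  then show ?thesis unfolding prod_cons .
qed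

lemma prod_sub_mem:
  assumes H: "\<forall>K\<in>set Ks. star_homog D st K" and K: "K \<in> set Ks"
  shows "ideal_prod_list D Ks \<subseteq> K"
proof -
  have H': "\<forall>K\<in>set (remove1 K Ks). star_homog D st K" using H by (meson notin_set_remove1)
  show ?thesis unfolding prod_remove[OF K]
    using ip_sub_left[OF homog_dm] H K prod_props[OF H'] by blast
qed

lemma prime_list:
  assumes M: "maxst D st M" and H: "\<forall>K\<in>set Ks. star_homog D st K" and sub: "ideal_prod_list D Ks \<subseteq> M"
  shows "\<exists>K\<in>set Ks. K \<subseteq> M"
  using H sub
proof (induction Ks)
  case Nil
  then have "D \<subseteq> M" unfolding prod_nil by simp
  then show ?case using maxst_1[OF M] D1 by blast
next
  case (Cons K Ks)
  have K: "star_homog D st K" and H': "\<forall>K\<in>set Ks. star_homog D st K" using Cons.prems(1) by simp_all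
  have "K \<subseteq> M \<or> ideal_prod_list D Ks \<subseteq> M"
    using prime_sets[OF M homog_sub[OF K] conjunct2[OF prod_props[OF H']]] Cons.prems(2)
    unfolding prod_cons by blast
  then show ?case
  proof
    assume "K \<subseteq> M" then show ?case by simp
  next
    assume "ideal_prod_list D Ks \<subseteq> M"
    then have "\<exists>K\<in>set Ks. K \<subseteq> M" using Cons.IH H' by blast
    then show ?case by simp
  qed
qed

lemma sum_self: "dmodule D K \<Longrightarrow> ideal_sum K K = K"
  using sum_least[of K K K] sum_left[of K K] by blast

lemma homog_not_self_comax: "star_homog D st K \<Longrightarrow> st (ideal_sum K K) \<noteq> D"
  using sum_self[OF homog_dm] homog_st homog_ne by metis

lemma mut_distinct:
  assumes H: "\<forall>K\<in>set Ks. star_homog D st K" and mc: "mutually_star_comaximal D st Ks"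
  shows "distinct Ks"
  unfolding distinct_conv_nth
proof (intro allI impI)
  fix i j assume ij: "i < length Ks" "j < length Ks" "i \<noteq> j"
  have c: "st (ideal_sum (Ks ! i) (Ks ! j)) = D"
    using mc ij unfolding mutually_star_comaximal_def star_comaximal_def by blast
  show "Ks ! i \<noteq> Ks ! j"
  proof
    assume "Ks ! i = Ks ! j"
    then have "st (ideal_sum (Ks ! i) (Ks ! i)) = D" using c by simp
    moreover have "star_homog D st (Ks ! i)" using H ij(1) nth_mem by blast
    ultimately show False using homog_not_self_comax by blast
  qed
qed

lemma mut_setcomax: "mutually_star_comaximal D st Ks \<Longrightarrow> setcomax Ks"
  unfolding setcomax_def
proof (intro ballI impI)
  fix J K assume mc: "mutually_star_comaximal D st Ks" and JK: "J \<in> set Ks" "K \<in> set Ks" "J \<noteq> K"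
  obtain i where i: "i < length Ks" "Ks ! i = J" using JK(1) in_set_conv_nth by metis
  obtain j where j: "j < length Ks" "Ks ! j = K" using JK(2) in_set_conv_nth by metis
  have "i \<noteq> j" using i j JK(3) by blast
  then have "star_comaximal D st (Ks ! i) (Ks ! j)" using mc i(1) j(1) unfolding mutually_star_comaximal_def by blast
  then show "st (ideal_sum J K) = D" unfolding star_comaximal_def i(2) j(2) .
qed

lemma setcomax_mut: "distinct Ks \<Longrightarrow> setcomax Ks \<Longrightarrow> mutually_star_comaximal D st Ks"
  unfolding setcomax_def mutually_star_comaximal_def star_comaximal_def
  by (metis nth_eq_iff_index_eq nth_mem)

lemma loc_eq:
  assumes H: "\<forall>K\<in>set Ks. star_homog D st K" and dis: "distinct Ks" and sc: "setcomax Ks"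
    and A: "A = st (ideal_prod_list D Ks)"
    and K: "K \<in> set Ks" and M: "maxst D st M" "K \<subseteq> M"
  shows "K = loc D A M"
proof
  have Kh: "star_homog D st K" using H K by blast
  have Pf: "frac_ideal D (ideal_prod_list D Ks)" using prod_props[OF H] by blast
  have AK: "A \<subseteq> K" unfolding A
    using st_mono[OF Pf homog_frac[OF Kh] prod_sub_mem[OF H K]] homog_st[OF Kh] by simp
  let ?R = "remove1 K Ks"
  have H': "\<forall>K\<in>set ?R. star_homog D st K" using H by (meson notin_set_remove1)
  have setR: "set ?R = set Ks - {K}" using dis by (rule set_remove1_eq)
  have RD: "ideal_prod_list D ?R \<subseteq> D" using prod_props[OF H'] by blast
  have "\<not> ideal_prod_list D ?R \<subseteq> M"
  proof
    assume "ideal_prod_list D ?R \<subseteq> M"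
    then obtain R where R: "R \<in> set ?R" "R \<subseteq> M" using prime_list[OF M(1) H'] by blast
    have "R \<in> set Ks" "R \<noteq> K" using R(1) setR by blast+
    then have "st (ideal_sum K R) = D" using sc K unfolding setcomax_def by metis
    moreover have "star_homog D st R" using H' R(1) by blast
    ultimately show False using comax_not_common[OF M(1) homog_isi[OF Kh] M(2) homog_isi[OF \<open>star_homog D st R\<close>] R(2)] by blast
  qed
  then obtain s where s: "s \<in> ideal_prod_list D ?R" "s \<notin> M" by blast
  have sD: "s \<in> D" using s(1) RD by blast
  show "K \<subseteq> loc D A M"
  proof
    fix x assume x: "x \<in> K"
    have "x * s \<in> ideal_prod_list D Ks" unfolding prod_remove[OF K] using x s(1) by (rule ip_mult)
    then have "x * s \<in> A" unfolding A using st_ext[OF Pf] by blast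
    then have "s * x \<in> A" by (simp add: mult.commute)
    moreover have "x \<in> D" using x homog_sub[OF Kh] by blast
    ultimately show "x \<in> loc D A M" unfolding loc_def using sD s(2) by blast
  qed
next
  have Kh: "star_homog D st K" using H K by blast
  have Pf: "frac_ideal D (ideal_prod_list D Ks)" using prod_props[OF H] by blast
  have AK: "A \<subseteq> K" unfolding A
    using st_mono[OF Pf homog_frac[OF Kh] prod_sub_mem[OF H K]] homog_st[OF Kh] by simp
  have dK: "dmodule D K" using homog_dm[OF Kh] .
  show "loc D A M \<subseteq> K"
  proof
    fix x assume "x \<in> loc D A M"
    then obtain s where x: "x \<in> D" and s: "s \<in> D" "s \<notin> M" "s * x \<in> A" unfolding loc_def by blast
    have sxK: "s * x \<in> K" using s(3) AK by blast
    let ?T = "ideal_sum K (principal D s)"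
    have pd: "dmodule D (principal D s)" using principal_dm[OF s(1)] .
    have psub: "principal D s \<subseteq> D" unfolding principal_def using Dmul s(1) by blast
    have Tf: "frac_ideal D ?T" using sum_int_frac[OF homog_frac[OF Kh] homog_sub[OF Kh] pd psub] .
    have TD: "?T \<subseteq> D" using sum_least[OF dmodule_D homog_sub[OF Kh] psub] .
    have sT: "s \<in> ?T" using sum_right[OF dK] principal_def D1 by force
    have KT: "K \<subseteq> ?T" using sum_left[OF pd] .
    have stT: "st ?T = D"
    proof (rule ccontr)
      assume ne: "st ?T \<noteq> D"
      obtain N where N: "maxst D st N" "st ?T \<subseteq> N" using exists_max[OF isi_st[OF Tf TD] ne] by blast
      have TN: "?T \<subseteq> N" using st_ext[OF Tf] N(2) by (rule order_trans)
      have "N = M" using homog_unique[OF Kh N(1) _ M] KT TN by blast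
      then show False using sT TN s(2) by blast
    qed
    show "x \<in> K"
    proof (cases "x = 0")
      case True then show ?thesis using dm0[OF dK] by simp
    next
      case False
      have sc: "scale x ?T \<subseteq> K"
      proof
        fix z assume "z \<in> scale x ?T"
        then obtain k d where z: "z = x * (k + d * s)" "k \<in> K" "d \<in> D"
          unfolding scale_def ideal_sum_def principal_def by blast
        have eq: "z = x * k + d * (s * x)" unfolding z(1) by algebra
        have "x * k \<in> K" using dmmul[OF dK x z(2)] .
        moreover have "d * (s * x) \<in> K" using dmmul[OF dK z(3) sxK] .
        ultimately show "z \<in> K" unfolding eq using dmadd[OF dK] by blast
      qed
      have "x \<in> scale x (st ?T)" unfolding stT scale_def using D1 by force
      also have "scale x (st ?T) = st (scale x ?T)" using st_scale[OF False Tf] by simp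
      also have "\<dots> \<subseteq> st K" using st_mono[OF scale_frac[OF Tf False] homog_frac[OF Kh] sc] .
      also have "\<dots> = K" using homog_st[OF Kh] .
      finally show ?thesis .
    qed
  qed
qed

lemma valid_set:
  assumes H: "\<forall>K\<in>set Ks. star_homog D st K" and dis: "distinct Ks" and sc: "setcomax Ks"
    and A: "A = st (ideal_prod_list D Ks)"
  shows "set Ks = {loc D A M | M. maxst D st M \<and> A \<subseteq> M}"
proof
  have Pf: "frac_ideal D (ideal_prod_list D Ks)" using prod_props[OF H] by blast
  show "set Ks \<subseteq> {loc D A M | M. maxst D st M \<and> A \<subseteq> M}"
  proof
    fix K assume K: "K \<in> set Ks"
    have Kh: "star_homog D st K" using H K by blast
    obtain M where M: "maxst D st M" "K \<subseteq> M" using homog_max[OF Kh] by blast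
    have AK: "A \<subseteq> K" unfolding A
      using st_mono[OF Pf homog_frac[OF Kh] prod_sub_mem[OF H K]] homog_st[OF Kh] by simp
    have "K = loc D A M" by (rule loc_eq[OF H dis sc A K M])
    moreover have "A \<subseteq> M" using AK M(2) by (rule order_trans)
    ultimately show "K \<in> {loc D A M | M. maxst D st M \<and> A \<subseteq> M}" using M(1) by blast
  qed
next
  have Pf: "frac_ideal D (ideal_prod_list D Ks)" using prod_props[OF H] by blast
  show "{loc D A M | M. maxst D st M \<and> A \<subseteq> M} \<subseteq> set Ks"
  proof
    fix Z assume "Z \<in> {loc D A M | M. maxst D st M \<and> A \<subseteq> M}"
    then obtain M where M: "maxst D st M" "A \<subseteq> M" "Z = loc D A M" by blast
    have "ideal_prod_list D Ks \<subseteq> M" using st_ext[OF Pf] M(2) unfolding A by (rule order_trans)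
    then obtain K where K: "K \<in> set Ks" "K \<subseteq> M" using prime_list[OF M(1) H] by blast
    have "K = loc D A M" by (rule loc_eq[OF H dis sc A K(1) M(1) K(2)])
    then show "Z \<in> set Ks" using M(3) K(1) by simp
  qed
qed

end


context sd begin

lemma existence:
  "(\<forall>I\<in>set Is. star_homog D st I) \<Longrightarrow> \<exists>Js. (\<forall>J\<in>set Js. star_homog D st J) \<and> distinct Js \<and> setcomax Js \<and>
      st (ideal_prod_list D Js) = st (ideal_prod_list D Is)"
proof (induction Is)
  case Nil
  show ?case by (rule exI[of _ "[]"]) (simp add: setcomax_def)
next
  case (Cons I Is)
  have Ih: "star_homog D st I" and H: "\<forall>I\<in>set Is. star_homog D st I" using Cons.prems by simp_all
  obtain Js where Js: "\<forall>J\<in>set Js. star_homog D st J" "distinct Js" "setcomax Js"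
    "st (ideal_prod_list D Js) = st (ideal_prod_list D Is)" using Cons.IH[OF H] by blast
  have PIs: "frac_ideal D (ideal_prod_list D Is)" using prod_props[OF H] by blast
  have PJs: "frac_ideal D (ideal_prod_list D Js)" using prod_props[OF Js(1)] by blast
  have If: "frac_ideal D I" using homog_frac[OF Ih] .
  have e1: "st (ideal_prod_list D (I # Is)) = st (ideal_prod I (ideal_prod_list D Js))"
  proof -
    have "st (ideal_prod_list D (I # Is)) = st (ideal_prod I (st (ideal_prod_list D Is)))"
      unfolding prod_cons by (rule st_ip2[OF If PIs, symmetric])
    also have "\<dots> = st (ideal_prod I (st (ideal_prod_list D Js)))" unfolding Js(4) ..
    also have "\<dots> = st (ideal_prod I (ideal_prod_list D Js))" by (rule st_ip2[OF If PJs])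
    finally show ?thesis .
  qed
  show ?case
  proof (cases "\<forall>J\<in>set Js. st (ideal_sum I J) = D")
    case True
    have nI: "I \<notin> set Js"
    proof
      assume "I \<in> set Js"
      then have "st (ideal_sum I I) = D" using True by blast
      then show False using homog_not_self_comax[OF Ih] by blast
    qed
    have "setcomax (I # Js)" unfolding setcomax_def
    proof (intro ballI impI)
      fix J K assume JK: "J \<in> set (I # Js)" "K \<in> set (I # Js)" "J \<noteq> K"
      show "st (ideal_sum J K) = D"
      proof (cases "J = I")
        case True then show ?thesis using JK \<open>\<forall>J\<in>set Js. st (ideal_sum I J) = D\<close> by auto
      next
        case False
        show ?thesis
        proof (cases "K = I")
          case True then show ?thesis using JK \<open>\<forall>J\<in>set Js. st (ideal_sum I J) = D\<close> sum_comm by auto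
        next
          case False
          then show ?thesis using JK \<open>J \<noteq> I\<close> Js(3) unfolding setcomax_def by auto
        qed
      qed
    qed
    moreover have "\<forall>J\<in>set (I # Js). star_homog D st J" using Ih Js(1) by simp
    moreover have "distinct (I # Js)" using nI Js(2) by simp
    moreover have "st (ideal_prod_list D (I # Js)) = st (ideal_prod_list D (I # Is))"
      unfolding prod_cons[of I Js] by (rule e1[symmetric])
    ultimately show ?thesis by blast
  next
    case False
    then obtain J where J: "J \<in> set Js" "st (ideal_sum I J) \<noteq> D" by blast
    have Jh: "star_homog D st J" using Js(1) J(1) by blast
    obtain M where M: "maxst D st M" "I \<subseteq> M" "J \<subseteq> M"
      using comax_common[OF homog_isi[OF Ih] homog_isi[OF Jh] J(2)] by blast
    define X where "X = st (ideal_prod I J)"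
    have Xh: "star_homog D st X" and XM: "X \<subseteq> M" using homog_prod[OF Ih Jh M] unfolding X_def by blast+
    let ?R = "remove1 J Js"
    have HR: "\<forall>K\<in>set ?R. star_homog D st K" using Js(1) by (meson notin_set_remove1)
    have setR: "set ?R = set Js - {J}" using Js(2) by (rule set_remove1_eq)
    have notM: "\<not> R \<subseteq> M" if R: "R \<in> set ?R" for R
    proof
      assume RM: "R \<subseteq> M"
      have "R \<in> set Js" "R \<noteq> J" using R setR by blast+
      then have "st (ideal_sum J R) = D" using Js(3) J(1) unfolding setcomax_def by metis
      moreover have Rh: "star_homog D st R" using HR R by blast
      ultimately show False using comax_not_common[OF M(1) homog_isi[OF Jh] M(3) homog_isi[OF Rh] RM] by blast
    qed
    have XR: "st (ideal_sum X R) = D" if R: "R \<in> set ?R" for R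
    proof (rule ccontr)
      assume "st (ideal_sum X R) \<noteq> D"
      moreover have Rh: "star_homog D st R" using HR R by blast
      ultimately obtain N where N: "maxst D st N" "X \<subseteq> N" "R \<subseteq> N"
        using comax_common[OF homog_isi[OF Xh] homog_isi[OF Rh]] by blast
      have "N = M" using homog_unique[OF Xh N(1,2) M(1) XM] .
      then show False using notM[OF R] N(3) by simp
    qed
    have nX: "X \<notin> set ?R" using notM XM by blast
    have sc: "setcomax (X # ?R)" unfolding setcomax_def
    proof (intro ballI impI)
      fix U V assume UV: "U \<in> set (X # ?R)" "V \<in> set (X # ?R)" "U \<noteq> V"
      show "st (ideal_sum U V) = D"
      proof (cases "U = X")
        case True then show ?thesis using UV XR by auto
      next
        case False
        show ?thesis
        proof (cases "V = X")
          case True then show ?thesis using UV XR sum_comm by auto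
        next
          case False
          then have "U \<in> set Js" "V \<in> set Js" using UV \<open>U \<noteq> X\<close> setR by auto
          then show ?thesis using UV(3) Js(3) unfolding setcomax_def by blast
        qed
      qed
    qed
    have hom: "\<forall>K\<in>set (X # ?R). star_homog D st K" using Xh HR by simp
    have dis: "distinct (X # ?R)" using nX distinct_remove1[OF Js(2)] by simp
    have PR: "frac_ideal D (ideal_prod_list D ?R)" using prod_props[OF HR] by blast
    have IJf: "frac_ideal D (ideal_prod I J)" using ip_frac[OF If homog_frac[OF Jh]] .
    have "st (ideal_prod_list D (X # ?R)) = st (ideal_prod (st (ideal_prod I J)) (ideal_prod_list D ?R))"
      unfolding prod_cons X_def ..
    also have "\<dots> = st (ideal_prod (ideal_prod I J) (ideal_prod_list D ?R))" by (rule st_ip[OF IJf PR])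
    also have "\<dots> = st (ideal_prod I (ideal_prod J (ideal_prod_list D ?R)))" by (simp only: ip_assoc)
    also have "ideal_prod J (ideal_prod_list D ?R) = ideal_prod_list D Js" by (rule prod_remove[OF J(1), symmetric])
    finally have "st (ideal_prod_list D (X # ?R)) = st (ideal_prod_list D (I # Is))" unfolding e1 .
    then show ?thesis using hom dis sc by blast
  qed
qed

end

theorem propositionK:
  fixes D :: "'k::field set" and st :: "'k set \<Rightarrow> 'k set"
    and A :: "'k set" and Is :: "'k set list"
  assumes "quotient_domain D"
    and "star_operation D st"
    and "finite_character D st"
    and "\<forall>I\<in>set Is. star_homog D st I"
    and "A = st (ideal_prod_list D Is)"
  shows "\<exists>Js. (\<forall>J\<in>set Js. star_homog D st J) \<and> mutually_star_comaximal D st Js \<and>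
             A = st (ideal_prod_list D Js) \<and>
             (\<forall>Ks. (\<forall>K\<in>set Ks. star_homog D st K) \<and> mutually_star_comaximal D st Ks \<and>
                   A = st (ideal_prod_list D Ks) \<longrightarrow> mset Ks = mset Js)"
proof -
  interpret sd D st using assms(1-3) by unfold_locales
  obtain Js where Js: "\<forall>J\<in>set Js. star_homog D st J" "distinct Js" "setcomax Js"
    "st (ideal_prod_list D Js) = st (ideal_prod_list D Is)" using existence[OF assms(4)] by blast
  have AJ: "A = st (ideal_prod_list D Js)" using Js(4) assms(5) by simp
  have mJ: "mutually_star_comaximal D st Js" using setcomax_mut[OF Js(2,3)] .
  have uniq: "mset Ks = mset Js"
    if K: "(\<forall>K\<in>set Ks. star_homog D st K) \<and> mutually_star_comaximal D st Ks \<and> A = st (ideal_prod_list D Ks)"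
    for Ks
  proof -
    have KH: "\<forall>K\<in>set Ks. star_homog D st K" and mK: "mutually_star_comaximal D st Ks"
      and AK: "A = st (ideal_prod_list D Ks)" using K by blast+
    have dK: "distinct Ks" using mut_distinct[OF KH mK] .
    have "set Ks = {loc D A M | M. maxst D st M \<and> A \<subseteq> M}"
      using valid_set[OF KH dK mut_setcomax[OF mK] AK] .
    also have "\<dots> = set Js" using valid_set[OF Js(1,2,3) AJ] by simp
    finally show ?thesis using set_eq_iff_mset_eq_distinct[OF dK Js(2)] by blast
  qed
  show ?thesis using Js(1) mJ AJ uniq by blast
qed


end
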